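(* For every $n\in\mathbb{N}$, all nonempty chains $c_k,c_s$ over $[n]$ and all formulas $\varphi,\psi$: (i) if $c_s$ is a subchain of $c_k$, then $\vdash_{(n)}\neg_{c_k}\varphi\to_{(n)}(\neg_{c_s}\psi\to_{(n)}(\varphi\to_{(n)}\psi))$; (ii) if $c_k$ is a subchain of $c_s$, then $\vdash_{(n)}\neg_{c_k}\varphi\to_{(n)}(\neg_{c_s}\psi\to_{(n)}\neg_{c_k\otimes c_s}(\varphi\to_{(n)}\psi))$; (iii) if $c_k$ and $c_s$ have no symbols in common, then $\vdash_{(n)}\neg_{c_k}\varphi\to_{(n)}(\neg_{c_s}\psi\to_{(n)}\neg_{c_s}(\varphi\to_{(n)}\psi))$.
   Context: Fix $n\in\mathbb{N}$, $n\ge 1$, and write $[n]=\{1,\dots,n\}$. Chains: a chain over $[n]$ is a finite sequence of distinct elements of $[n]$; chains with the same length and the same symbols are identified, so a chain is effectively a subset of $[n]$. $c_k$ denotes a chain with $k$ symbols, $\epsilon$ the empty chain, and $(n)$ the chain consisting of all symbols of $[n]$. For chains $c,d$: the concatenation $c\cdot d$ is the chain of symbols occurring in $c$ or in $d$; the coconcatenation $c\otimes d$ is the chain of symbols occurring in exactly one of $c,d$; $d$ is a subchain of $c$ if every symbol of $d$ is a symbol of $c$. The complementary chain $c'_{n-k}$ of $c_k$ is the chain of the symbols of $[n]$ not occurring in $c_k$. Language of $\mathbf{CPN}_n$: a countable set $P_n$ of propositional letters; constants $\perp_c$ for each chain $c$ over $[n]$ with $1\le |c|\le n-1$, and constants $\perp_{(n)}$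 (contradiction) and $\top_{(n)}$ (truth); a unary connective $\neg_c$ for each nonempty chain $c$ over $[n]$ ($\neg_{(n)}$ is the strong negation; the $\neg_c$ with $|c|\le n-1$ are weak negations); a binary connective $\to_{(n)}$. Formulas: propositional letters and constants are formulas; if $\varphi,\psi$ are formulas then so are $\neg_c\varphi$ and $(\varphi\to_{(n)}\psi)$. Conventions: $\neg_\epsilon\varphi:=\varphi$, $\perp_\epsilon:=\top_{(n)}$, and $\perp_c$ for $c=(n)$ means $\perp_{(n)}$. Abbreviations: $\varphi\wedge_{(n)}\psi:=\neg_{(n)}(\varphi\to_{(n)}\neg_{(n)}\psi)$, $\varphi\vee_{(n)}\psi:=\neg_{(n)}\varphi\to_{(n)}\psi$, $\varphi\leftrightarrow_{(n)}\psi:=(\varphi\to_{(n)}\psi)\wedge_{(n)}(\psi\to_{(n)}\varphi)$. Axioms of $\mathbf{CPN}_n$, for all formulas $\varphi,\psi,\chi$ and all nonempty chains $c_k,c_r$ over $[n]$: (A1) $\varphi\to_{(n)}(\psi\to_{(n)}\varphi)$; (A2) $(\varphi\to_{(n)}(\psi\to_{(n)}\chi))\to_{(n)}((\varphi\to_{(n)}\psi)\to_{(n)}(\varphi\to_{(n)}\chi))$; (A3) $(\neg_{(n)}\psi\to_{(n)}\neg_{(n)}\varphi)\to_{(n)}((\neg_{(n)}\psi\to_{(n)}\varphi)\to_{(n)}\psi)$; (A4) $\varphi\to_{(n)}(\perp_{c_k}\to_{(n)}\neg_{c_k}\varphi)$; (A5) $\neg_{c_k}\neg_{c_r}\varphi\leftrightarrow_{(n)}\neg_{c_k\otimes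 c_r}\varphi$; (A6) $\neg_{c_k}\perp_{c_r}\leftrightarrow_{(n)}\perp_{c_k\otimes c_r}$; (A7) $\perp_{c_k}\to_{(n)}\perp_{c_r}$, whenever $c_r$ is a subchain of $c_k$. The only rule of inference is modus ponens (from $\varphi$ and $\varphi\to_{(n)}\psi$ infer $\psi$). For a set $\Sigma$ of formulas, $\Sigma\vdash_{(n)}\varphi$ means there is a finite sequence of formulas ending with $\varphi$, each of which is an axiom, a member of $\Sigma$, or obtained from two earlier members by modus ponens; $\vdash_{(n)}\varphi$ means $\emptyset\vdash_{(n)}\varphi$. *)

theory Defs
  imports Main
begin

text \<open>Chains over [n] are identified with subsets of {1..n}.
  Formulas of CPN_n: propositional letters (countably many, indexed by nat),
  constants Bot c (for c a subset of {1..n}; Bot {} is the truth constant,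
  Bot {1..n} the contradiction), weak/strong negations Neg c (c nonempty),
  and the implication Imp.\<close>

datatype form =
    Var nat
  | Bot "nat set"
  | Neg "nat set" form
  | Imp form form

fun wf :: "nat \<Rightarrow> form \<Rightarrow> bool" where
  "wf n (Var p) = True"
| "wf n (Bot c) = (c \<subseteq> {1..n})"
| "wf n (Neg c \<phi>) = (c \<noteq> {} \<and> c \<subseteq> {1..n} \<and> wf n \<phi>)"
| "wf n (Imp \<phi> \<psi>) = (wf n \<phi> \<and> wf n \<psi>)"

definition neg :: "nat set \<Rightarrow> form \<Rightarrow> form" where
  "neg c \<phi> = (if c = {} then \<phi> else Neg c \<phi>)"

text \<open>Coconcatenation of chains (symmetric difference).\<close>
definition cocat :: "nat set \<Rightarrow> nat set \<Rightarrow> nat set" where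
  "cocat c d = (c - d) \<union> (d - c)"

definition sneg :: "nat \<Rightarrow> form \<Rightarrow> form" where
  "sneg n \<phi> = Neg {1..n} \<phi>"

definition conj :: "nat \<Rightarrow> form \<Rightarrow> form \<Rightarrow> form" where
  "conj n \<phi> \<psi> = sneg n (Imp \<phi> (sneg n \<psi>))"

definition iff :: "nat \<Rightarrow> form \<Rightarrow> form \<Rightarrow> form" where
  "iff n \<phi> \<psi> = conj n (Imp \<phi> \<psi>) (Imp \<psi> \<phi>)"

inductive axiom :: "nat \<Rightarrow> form \<Rightarrow> bool" for n :: nat where
  A1: "\<lbrakk>wf n \<phi>; wf n \<psi>\<rbrakk> \<Longrightarrow> axiom n (Imp \<phi> (Imp \<psi> \<phi>))"
| A2: "\<lbrakk>wf n \<phi>; wf n \<psi>; wf n \<chi>\<rbrakk> \<Longrightarrow>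
     axiom n (Imp (Imp \<phi> (Imp \<psi> \<chi>)) (Imp (Imp \<phi> \<psi>) (Imp \<phi> \<chi>)))"
| A3: "\<lbrakk>wf n \<phi>; wf n \<psi>\<rbrakk> \<Longrightarrow>
     axiom n (Imp (Imp (sneg n \<psi>) (sneg n \<phi>)) (Imp (Imp (sneg n \<psi>) \<phi>) \<psi>))"
| A4: "\<lbrakk>wf n \<phi>; ck \<noteq> {}; ck \<subseteq> {1..n}\<rbrakk> \<Longrightarrow>
     axiom n (Imp \<phi> (Imp (Bot ck) (Neg ck \<phi>)))"
| A5: "\<lbrakk>wf n \<phi>; ck \<noteq> {}; ck \<subseteq> {1..n}; cr \<noteq> {}; cr \<subseteq> {1..n}\<rbrakk> \<Longrightarrow>
     axiom n (iff n (Neg ck (Neg cr \<phi>)) (neg (cocat ck cr) \<phi>))"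
| A6: "\<lbrakk>ck \<noteq> {}; ck \<subseteq> {1..n}; cr \<noteq> {}; cr \<subseteq> {1..n}\<rbrakk> \<Longrightarrow>
     axiom n (iff n (Neg ck (Bot cr)) (Bot (cocat ck cr)))"
| A7: "\<lbrakk>ck \<noteq> {}; ck \<subseteq> {1..n}; cr \<noteq> {}; cr \<subseteq> {1..n}; cr \<subseteq> ck\<rbrakk> \<Longrightarrow>
     axiom n (Imp (Bot ck) (Bot cr))"

inductive derives :: "nat \<Rightarrow> form set \<Rightarrow> form \<Rightarrow> bool" for n :: nat and \<Sigma> :: "form set" where
  ax: "axiom n \<phi> \<Longrightarrow> derives n \<Sigma> \<phi>"
| hyp: "\<phi> \<in> \<Sigma> \<Longrightarrow> derives n \<Sigma> \<phi>"
| mp: "\<lbrakk>derives n \<Sigma> \<phi>; derives n \<Sigma> (Imp \<phi> \<psi>)\<rbrakk> \<Longrightarrow> derives n \<Sigma> \<psi>"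

definition provable :: "nat \<Rightarrow> form \<Rightarrow> bool" where
  "provable n \<phi> = derives n {} \<phi>"

end

theory Submission
  imports Defs
begin

context
  fixes n :: nat
  assumes n1: "1 \<le> n"
begin

lemma axiom_wf: "axiom n \<phi> \<Longrightarrow> wf n \<phi>"
  by (induction rule: axiom.induct)
     (use n1 in \<open>auto simp: iff_def conj_def sneg_def neg_def cocat_def\<close>)

lemma derives_wf: "derives n \<Sigma> \<phi> \<Longrightarrow> \<forall>x\<in>\<Sigma>. wf n x \<Longrightarrow> wf n \<phi>"
  by (induction rule: derives.induct) (auto simp: axiom_wf)

lemma mono: "derives n \<Sigma> \<phi> \<Longrightarrow> \<Sigma> \<subseteq> \<Sigma>' \<Longrightarrow> derives n \<Sigma>' \<phi>"
  by (induction rule: derives.induct) (auto intro: derives.intros)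

lemma wk: "derives n \<Sigma> \<phi> \<Longrightarrow> derives n (insert X \<Sigma>) \<phi>"
  using mono by blast

lemma wf_sneg[simp]: "wf n (sneg n A) = wf n A"
  using n1 by (simp add: sneg_def)

lemma MP: "derives n \<Sigma> A \<Longrightarrow> derives n \<Sigma> (Imp A B) \<Longrightarrow> derives n \<Sigma> B"
  by (rule derives.mp)

lemma RA1: "derives n \<Sigma> A \<Longrightarrow> wf n A \<Longrightarrow> wf n B \<Longrightarrow> derives n \<Sigma> (Imp B A)"
  by (meson MP axiom.A1 derives.ax)

lemma ident: "wf n A \<Longrightarrow> derives n \<Sigma> (Imp A A)"
proof -
  assume a: "wf n A"
  have 1: "derives n \<Sigma> (Imp A (Imp (Imp A A) A))" using a by (simp add: axiom.A1 derives.ax)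
  have 2: "derives n \<Sigma> (Imp (Imp A (Imp (Imp A A) A)) (Imp (Imp A (Imp A A)) (Imp A A)))"
    using a by (simp add: axiom.A2 derives.ax)
  have 3: "derives n \<Sigma> (Imp A (Imp A A))" using a by (simp add: axiom.A1 derives.ax)
  show ?thesis using MP[OF 3 MP[OF 1 2]] .
qed

lemma DT:
  assumes "derives n (insert A \<Sigma>) B" "wf n A" "\<forall>x\<in>\<Sigma>. wf n x"
  shows "derives n \<Sigma> (Imp A B)"
  using assms(1)
proof induction
  case (ax \<phi>)
  have "derives n \<Sigma> \<phi>" using ax by (rule derives.ax)
  then show ?case using RA1 axiom_wf[OF ax] assms(2) by simp
next
  case (hyp \<phi>)
  then show ?case
  proof (cases "\<phi> = A")
    case True then show ?thesis using ident assms(2) by simp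
  next
    case False
    then have m: "\<phi> \<in> \<Sigma>" using hyp by simp
    then have "wf n \<phi>" using assms(3) by simp
    then show ?thesis using RA1[OF derives.hyp[OF m]] assms(2) by simp
  qed
next
  case (mp \<phi> \<psi>)
  have w: "\<forall>x\<in>insert A \<Sigma>. wf n x" using assms by auto
  have wp: "wf n \<phi>" using derives_wf[OF mp.hyps(1) w] .
  have wq: "wf n \<psi>" using derives_wf[OF mp.hyps(2) w] by simp
  have "derives n \<Sigma> (Imp (Imp A (Imp \<phi> \<psi>)) (Imp (Imp A \<phi>) (Imp A \<psi>)))"
    using wp wq assms(2) by (simp add: axiom.A2 derives.ax)
  then show ?case using mp.IH MP by blast
qed

abbreviation N where "N A \<equiv> sneg n A"

lemma A3r:
  assumes "derives n \<Sigma> (Imp (N B) (N A))" "derives n \<Sigma> (Imp (N B) A)" "wf n A" "wf n B"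
  shows "derives n \<Sigma> B"
proof -
  have "derives n \<Sigma> (Imp (Imp (N B) (N A)) (Imp (Imp (N B) A) B))"
    using assms by (simp add: axiom.A3 derives.ax)
  then show ?thesis using assms MP by blast
qed

lemma exfalso:
  assumes "derives n \<Sigma> (N A)" "derives n \<Sigma> A" "wf n A" "wf n B"
  shows "derives n \<Sigma> B"
proof (rule A3r[of _ B A])
  show "derives n \<Sigma> (Imp (N B) (N A))" by (rule RA1) (use assms in simp_all)
  show "derives n \<Sigma> (Imp (N B) A)" by (rule RA1) (use assms in simp_all)
qed (use assms in simp_all)

lemma dneg_elim:
  assumes "derives n \<Sigma> (N (N A))" "wf n A"
  shows "derives n \<Sigma> A"
proof (rule A3r[of _ A "N A"])
  show "derives n \<Sigma> (Imp (N A) (N (N A)))" by (rule RA1) (use assms in simp_all)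
  show "derives n \<Sigma> (Imp (N A) (N A))" by (rule ident) (use assms in simp_all)
qed (use assms in simp_all)

lemma contra:
  assumes "derives n \<Sigma> (Imp A B)" "derives n \<Sigma> (N B)" "wf n A" "wf n B" "\<forall>x\<in>\<Sigma>. wf n x"
  shows "derives n \<Sigma> (N A)"
proof (rule A3r[of _ "N A" B])
  show "derives n \<Sigma> (Imp (N (N A)) (N B))" by (rule RA1) (use assms in simp_all)
  have h: "derives n (insert (N (N A)) \<Sigma>) (N (N A))" by (rule derives.hyp) simp
  have "derives n (insert (N (N A)) \<Sigma>) A" by (rule dneg_elim[OF h assms(3)])
  then have "derives n (insert (N (N A)) \<Sigma>) B" using MP wk[OF assms(1)] by blast
  then show "derives n \<Sigma> (Imp (N (N A)) B)" by (rule DT) (use assms in simp_all)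
qed (use assms in simp_all)

lemma cases:
  assumes "derives n (insert A \<Sigma>) B" "derives n (insert (N A) \<Sigma>) B"
    "wf n A" "wf n B" "\<forall>x\<in>\<Sigma>. wf n x"
  shows "derives n \<Sigma> B"
proof -
  have i1: "derives n \<Sigma> (Imp A B)" by (rule DT) (use assms in simp_all)
  have i2: "derives n \<Sigma> (Imp (N A) B)" by (rule DT) (use assms in simp_all)
  have hb: "derives n (insert (N B) \<Sigma>) (N B)" by (rule derives.hyp) simp
  have w: "\<forall>x\<in>insert (N B) \<Sigma>. wf n x" using assms by simp
  show ?thesis
  proof (rule A3r[of _ B A])
    have "derives n (insert (N B) \<Sigma>) (N A)"
      by (rule contra[OF wk[OF i1] hb]) (use assms w in simp_all)
    then show "derives n \<Sigma> (Imp (N B) (N A))" by (rule DT) (use assms in simp_all)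
    have "derives n (insert (N B) \<Sigma>) (N (N A))"
      by (rule contra[OF wk[OF i2] hb]) (use assms w in simp_all)
    then have "derives n (insert (N B) \<Sigma>) A" using dneg_elim assms(3) by blast
    then show "derives n \<Sigma> (Imp (N B) A)" by (rule DT) (use assms in simp_all)
  qed (use assms in simp_all)
qed

lemma iffD1:
  assumes "derives n \<Sigma> (iff n A B)" "derives n \<Sigma> A" "wf n A" "wf n B" "\<forall>x\<in>\<Sigma>. wf n x"
  shows "derives n \<Sigma> B"
proof -
  let ?X = "Imp (Imp A B) (N (Imp B A))"
  have "derives n \<Sigma> (Imp A B)"
  proof (rule cases[of "Imp A B"])
    show "derives n (insert (Imp A B) \<Sigma>) (Imp A B)" by (rule derives.hyp) simp
    have h1: "derives n (insert (Imp A B) (insert (N (Imp A B)) \<Sigma>)) (N (Imp A B))"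
      by (rule derives.hyp) simp
    have h2: "derives n (insert (Imp A B) (insert (N (Imp A B)) \<Sigma>)) (Imp A B)"
      by (rule derives.hyp) simp
    have "derives n (insert (Imp A B) (insert (N (Imp A B)) \<Sigma>)) (N (Imp B A))"
      by (rule exfalso[OF h1 h2]) (use assms in simp_all)
    then have x: "derives n (insert (N (Imp A B)) \<Sigma>) ?X"
      by (rule DT) (use assms in simp_all)
    have nx: "derives n (insert (N (Imp A B)) \<Sigma>) (N ?X)"
      using wk[OF assms(1)] by (simp add: iff_def conj_def)
    show "derives n (insert (N (Imp A B)) \<Sigma>) (Imp A B)"
      by (rule exfalso[OF nx x]) (use assms in simp_all)
  qed (use assms in simp_all)
  then show ?thesis using assms(2) MP by blast
qed

lemma neg_imp:
  assumes "derives n \<Sigma> A" "derives n \<Sigma> (N B)" "wf n A" "wf n B" "\<forall>x\<in>\<Sigma>. wf n x"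
  shows "derives n \<Sigma> (N (Imp A B))"
proof (rule cases[of "Imp A B"])
  have h: "derives n (insert (Imp A B) \<Sigma>) (Imp A B)" by (rule derives.hyp) simp
  have "derives n (insert (Imp A B) \<Sigma>) B" using MP[OF wk[OF assms(1)] h] .
  then show "derives n (insert (Imp A B) \<Sigma>) (N (Imp A B))"
    by (rule exfalso[OF wk[OF assms(2)]]) (use assms in simp_all)
  show "derives n (insert (N (Imp A B)) \<Sigma>) (N (Imp A B))" by (rule derives.hyp) simp
qed (use assms in simp_all)

lemma L3:
  assumes "derives n \<Sigma> (Bot c)" "derives n \<Sigma> A" "c \<noteq> {}" "c \<subseteq> {1..n}" "wf n A"
  shows "derives n \<Sigma> (Neg c A)"
proof -
  have "derives n \<Sigma> (Imp A (Imp (Bot c) (Neg c A)))" using assms by (simp add: axiom.A4 derives.ax)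
  then show ?thesis using assms MP by blast
qed

lemma L1:
  assumes "derives n \<Sigma> (Bot c)" "derives n \<Sigma> (Neg c A)" "c \<noteq> {}" "c \<subseteq> {1..n}" "wf n A"
    "\<forall>x\<in>\<Sigma>. wf n x"
  shows "derives n \<Sigma> A"
proof -
  have 1: "derives n \<Sigma> (Neg c (Neg c A))" using L3 assms by simp
  have "derives n \<Sigma> (iff n (Neg c (Neg c A)) (neg (cocat c c) A))"
    using assms by (simp add: axiom.A5 derives.ax)
  then have "derives n \<Sigma> (iff n (Neg c (Neg c A)) A)" by (simp add: cocat_def neg_def)
  then show ?thesis using iffD1 1 assms by auto
qed

lemma comp:
  assumes "derives n \<Sigma> (N (Bot c))" "c \<noteq> {}" "c \<subseteq> {1..n}" "c \<noteq> {1..n}"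
    "\<forall>x\<in>\<Sigma>. wf n x"
  shows "derives n \<Sigma> (Bot ({1..n} - c))"
proof -
  have "derives n \<Sigma> (iff n (Neg {1..n} (Bot c)) (Bot (cocat {1..n} c)))"
    using assms n1 by (intro derives.ax axiom.A6) auto
  moreover have "cocat {1..n} c = {1..n} - c" using assms by (auto simp: cocat_def)
  ultimately show ?thesis using iffD1 assms by (auto simp: sneg_def)
qed

lemma L2:
  assumes "derives n \<Sigma> (N (Bot c))" "derives n \<Sigma> (Neg c A)" "c \<noteq> {}" "c \<subseteq> {1..n}" "wf n A"
    "\<forall>x\<in>\<Sigma>. wf n x"
  shows "derives n \<Sigma> (N A)"
proof (cases "c = {1..n}")
  case True then show ?thesis using assms by (simp add: sneg_def)
next
  case False
  let ?d = "{1..n} - c"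
  have dne: "?d \<noteq> {}" using False assms by auto
  have b: "derives n \<Sigma> (Bot ?d)" using comp assms False by blast
  have 1: "derives n \<Sigma> (Neg ?d (Neg c A))" using L3[OF b assms(2)] dne assms by auto
  have "derives n \<Sigma> (iff n (Neg ?d (Neg c A)) (neg (cocat ?d c) A))"
    using assms dne by (intro derives.ax axiom.A5) auto
  moreover have "cocat ?d c = {1..n}" using assms(4) unfolding cocat_def by blast
  then have "neg (cocat ?d c) A = N A" using n1 by (simp add: neg_def sneg_def)
  ultimately have "derives n \<Sigma> (iff n (Neg ?d (Neg c A)) (N A))" by simp
  then show ?thesis by (rule iffD1) (use 1 assms dne in auto)
qed

lemma L4:
  assumes "derives n \<Sigma> (N (Bot c))" "derives n \<Sigma> (N A)" "c \<noteq> {}" "c \<subseteq> {1..n}" "wf n A"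
    "\<forall>x\<in>\<Sigma>. wf n x"
  shows "derives n \<Sigma> (Neg c A)"
proof (cases "c = {1..n}")
  case True then show ?thesis using assms by (simp add: sneg_def)
next
  case False
  let ?d = "{1..n} - c"
  have dne: "?d \<noteq> {}" using False assms by auto
  have b: "derives n \<Sigma> (Bot ?d)" using comp assms False by blast
  have 1: "derives n \<Sigma> (Neg ?d (N A))" using L3[OF b assms(2)] dne assms by auto
  have "derives n \<Sigma> (iff n (Neg ?d (Neg {1..n} A)) (neg (cocat ?d {1..n}) A))"
    using assms dne n1 by (intro derives.ax axiom.A5) auto
  moreover have "cocat ?d {1..n} = c" using assms(4) unfolding cocat_def by blast
  then have "neg (cocat ?d {1..n}) A = Neg c A" using assms(3) by (simp add: neg_def)
  ultimately have "derives n \<Sigma> (iff n (Neg ?d (N A)) (Neg c A))" by (simp add: sneg_def)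
  then show ?thesis by (rule iffD1) (use 1 assms dne in auto)
qed

lemma A7r: "derives n \<Sigma> (Bot c) \<Longrightarrow> d \<noteq> {} \<Longrightarrow> d \<subseteq> c \<Longrightarrow> c \<subseteq> {1..n}
  \<Longrightarrow> derives n \<Sigma> (Bot d)"
  by (rule MP, assumption, rule derives.ax, rule axiom.A7) auto

lemma imp_neg:
  assumes "derives n \<Gamma> (N A)" "wf n A" "wf n B" "\<forall>x\<in>\<Gamma>. wf n x"
  shows "derives n \<Gamma> (Imp A B)"
proof (rule DT)
  have h: "derives n (insert A \<Gamma>) A" by (rule derives.hyp) simp
  show "derives n (insert A \<Gamma>) B" by (rule exfalso[OF wk[OF assms(1)] h]) (use assms in simp_all)
qed (use assms in simp_all)

lemma part1:
  assumes hP: "derives n \<Gamma> (Neg ck \<phi>)" and hQ: "derives n \<Gamma> (Neg cs \<psi>)"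
    and wG: "\<forall>x\<in>\<Gamma>. wf n x"
    and c: "ck \<noteq> {}" "ck \<subseteq> {1..n}" "cs \<noteq> {}" "cs \<subseteq> {1..n}" "cs \<subseteq> ck"
    and w: "wf n \<phi>" "wf n \<psi>"
  shows "derives n \<Gamma> (Imp \<phi> \<psi>)"
proof (rule cases[of "Bot ck"])
  let ?G = "insert (Bot ck) \<Gamma>"
  have b: "derives n ?G (Bot ck)" by (rule derives.hyp) simp
  have bs: "derives n ?G (Bot cs)" by (rule A7r[OF b]) (use c in simp_all)
  have "derives n ?G \<psi>" by (rule L1[OF bs wk[OF hQ]]) (use c w wG in simp_all)
  then show "derives n ?G (Imp \<phi> \<psi>)" by (rule RA1) (use w in simp_all)
next
  let ?G = "insert (N (Bot ck)) \<Gamma>"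
  have b: "derives n ?G (N (Bot ck))" by (rule derives.hyp) simp
  have "derives n ?G (N \<phi>)" by (rule L2[OF b wk[OF hP]]) (use c w wG in simp_all)
  then show "derives n ?G (Imp \<phi> \<psi>)" by (rule imp_neg) (use c w wG in simp_all)
qed (use c w wG in simp_all)

lemma part2:
  assumes hP: "derives n \<Gamma> (Neg ck \<phi>)" and hQ: "derives n \<Gamma> (Neg cs \<psi>)"
    and wG: "\<forall>x\<in>\<Gamma>. wf n x"
    and c: "ck \<noteq> {}" "ck \<subseteq> {1..n}" "cs \<noteq> {}" "cs \<subseteq> {1..n}" "ck \<subseteq> cs"
    and w: "wf n \<phi>" "wf n \<psi>"
  shows "derives n \<Gamma> (neg (cocat ck cs) (Imp \<phi> \<psi>))"
proof (cases "ck = cs")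
  case True
  then have "cocat ck cs = {}" by (simp add: cocat_def)
  then show ?thesis using part1[OF hP hQ wG c(1-4)] True w by (simp add: neg_def)
next
  case False
  let ?d = "cs - ck"
  have cc: "cocat ck cs = ?d" using c by (auto simp: cocat_def)
  have dne: "?d \<noteq> {}" using False c by auto
  have dsub: "?d \<subseteq> {1..n}" using c by auto
  have wI: "wf n (Imp \<phi> \<psi>)" using w by simp
  have "derives n \<Gamma> (Neg ?d (Imp \<phi> \<psi>))"
  proof (rule cases[of "Bot cs"])
    let ?G = "insert (Bot cs) \<Gamma>"
    have b: "derives n ?G (Bot cs)" by (rule derives.hyp) simp
    have bd: "derives n ?G (Bot ?d)" by (rule A7r[OF b]) (use c dne in auto)
    have "derives n ?G \<psi>" by (rule L1[OF b wk[OF hQ]]) (use c w wG in simp_all)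
    then have "derives n ?G (Imp \<phi> \<psi>)" by (rule RA1) (use w in simp_all)
    then show "derives n ?G (Neg ?d (Imp \<phi> \<psi>))" by (rule L3[OF bd]) (use dne dsub w in simp_all)
  next
    let ?G = "insert (N (Bot cs)) \<Gamma>"
    have nb: "derives n ?G (N (Bot cs))" by (rule derives.hyp) simp
    have wG2: "\<forall>x\<in>?G. wf n x" using wG c by simp
    show "derives n ?G (Neg ?d (Imp \<phi> \<psi>))"
    proof (rule cases[of "Bot ck"])
      let ?H = "insert (Bot ck) ?G"
      have wH: "\<forall>x\<in>?H. wf n x" using wG2 c by simp
      have b: "derives n ?H (Bot ck)" by (rule derives.hyp) simp
      have p: "derives n ?H \<phi>" by (rule L1[OF b wk[OF wk[OF hP]]]) (use c w wH in simp_all)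
      have q: "derives n ?H (N \<psi>)" by (rule L2[OF wk[OF nb] wk[OF wk[OF hQ]]]) (use c w wH in simp_all)
      have ni: "derives n ?H (N (Imp \<phi> \<psi>))" by (rule neg_imp[OF p q]) (use w wH in simp_all)
      have nbd: "derives n ?H (N (Bot ?d))"
      proof (rule cases[of "Bot ?d"])
        let ?K = "insert (Bot ?d) ?H"
        have wK: "\<forall>x\<in>?K. wf n x" using wH dsub by simp
        have bd: "derives n ?K (Bot ?d)" by (rule derives.hyp) simp
        have x: "derives n ?K (Neg ck (Bot ?d))" by (rule L3[OF wk[OF b] bd]) (use c dsub in simp_all)
        have "derives n ?K (iff n (Neg ck (Bot ?d)) (Bot (cocat ck ?d)))"
          by (rule derives.ax, rule axiom.A6) (use c dne dsub in simp_all)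
        moreover have "cocat ck ?d = cs" using c by (auto simp: cocat_def)
        ultimately have "derives n ?K (iff n (Neg ck (Bot ?d)) (Bot cs))" by simp
        then have "derives n ?K (Bot cs)" by (rule iffD1[OF _ x]) (use c dsub wK in simp_all)
        then show "derives n ?K (N (Bot ?d))" by (rule exfalso[OF wk[OF wk[OF nb]]]) (use c dsub in simp_all)
      next
        show "derives n (insert (N (Bot ?d)) ?H) (N (Bot ?d))" by (rule derives.hyp) simp
      qed (use dsub wH in simp_all)
      show "derives n ?H (Neg ?d (Imp \<phi> \<psi>))" by (rule L4[OF nbd ni]) (use dne dsub w wH in simp_all)
    next
      let ?H = "insert (N (Bot ck)) ?G"
      have wH: "\<forall>x\<in>?H. wf n x" using wG2 c by simp
      have b: "derives n ?H (N (Bot ck))" by (rule derives.hyp) simp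
      have "derives n ?H (N \<phi>)" by (rule L2[OF b wk[OF wk[OF hP]]]) (use c w wH in simp_all)
      then have i: "derives n ?H (Imp \<phi> \<psi>)" by (rule imp_neg) (use w wH in simp_all)
      have ckn: "ck \<noteq> {1..n}" using dne c by auto
      have bc: "derives n ?H (Bot ({1..n} - ck))" by (rule comp[OF b]) (use c ckn wH in simp_all)
      have bd: "derives n ?H (Bot ?d)" by (rule A7r[OF bc]) (use c dne in auto)
      show "derives n ?H (Neg ?d (Imp \<phi> \<psi>))" by (rule L3[OF bd i]) (use dne dsub w in simp_all)
    qed (use wG2 dne dsub w c in simp_all)
  qed (use wG dne dsub w c in simp_all)
  then show ?thesis using cc dne by (simp add: neg_def)
qed

lemma part3:
  assumes hP: "derives n \<Gamma> (Neg ck \<phi>)" and hQ: "derives n \<Gamma> (Neg cs \<psi>)"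
    and wG: "\<forall>x\<in>\<Gamma>. wf n x"
    and c: "ck \<noteq> {}" "ck \<subseteq> {1..n}" "cs \<noteq> {}" "cs \<subseteq> {1..n}" "ck \<inter> cs = {}"
    and w: "wf n \<phi>" "wf n \<psi>"
  shows "derives n \<Gamma> (Neg cs (Imp \<phi> \<psi>))"
proof (rule cases[of "Bot ck"])
  let ?G = "insert (Bot ck) \<Gamma>"
  have wG1: "\<forall>x\<in>?G. wf n x" using wG c by simp
  have b: "derives n ?G (Bot ck)" by (rule derives.hyp) simp
  have p: "derives n ?G \<phi>" by (rule L1[OF b wk[OF hP]]) (use c w wG1 in simp_all)
  show "derives n ?G (Neg cs (Imp \<phi> \<psi>))"
  proof (rule cases[of "Bot cs"])
    let ?H = "insert (Bot cs) ?G"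
    have bs: "derives n ?H (Bot cs)" by (rule derives.hyp) simp
    have "derives n ?H \<psi>" by (rule L1[OF bs wk[OF wk[OF hQ]]]) (use c w wG1 in simp_all)
    then have "derives n ?H (Imp \<phi> \<psi>)" by (rule RA1) (use w in simp_all)
    then show "derives n ?H (Neg cs (Imp \<phi> \<psi>))" by (rule L3[OF bs]) (use c w in simp_all)
  next
    let ?H = "insert (N (Bot cs)) ?G"
    have wH: "\<forall>x\<in>?H. wf n x" using wG1 c by simp
    have nbs: "derives n ?H (N (Bot cs))" by (rule derives.hyp) simp
    have q: "derives n ?H (N \<psi>)" by (rule L2[OF nbs wk[OF wk[OF hQ]]]) (use c w wH in simp_all)
    have "derives n ?H (N (Imp \<phi> \<psi>))" by (rule neg_imp[OF wk[OF p] q]) (use w wH in simp_all)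
    then show "derives n ?H (Neg cs (Imp \<phi> \<psi>))" by (rule L4[OF nbs]) (use c w wH in simp_all)
  qed (use wG1 c w in simp_all)
next
  let ?G = "insert (N (Bot ck)) \<Gamma>"
  have wH: "\<forall>x\<in>?G. wf n x" using wG c by simp
  have b: "derives n ?G (N (Bot ck))" by (rule derives.hyp) simp
  have "derives n ?G (N \<phi>)" by (rule L2[OF b wk[OF hP]]) (use c w wH in simp_all)
  then have i: "derives n ?G (Imp \<phi> \<psi>)" by (rule imp_neg) (use w wH in simp_all)
  have ckn: "ck \<noteq> {1..n}" using c by auto
  have bc: "derives n ?G (Bot ({1..n} - ck))" by (rule comp[OF b]) (use c ckn wH in simp_all)
  have bd: "derives n ?G (Bot cs)" by (rule A7r[OF bc]) (use c in auto)
  show "derives n ?G (Neg cs (Imp \<phi> \<psi>))" by (rule L3[OF bd i]) (use c w in simp_all)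
qed (use wG c w in simp_all)

lemma two_hyp:
  assumes "\<And>\<Gamma>. derives n \<Gamma> X \<Longrightarrow> derives n \<Gamma> Y \<Longrightarrow> \<forall>x\<in>\<Gamma>. wf n x \<Longrightarrow> derives n \<Gamma> Z"
    "wf n X" "wf n Y"
  shows "provable n (Imp X (Imp Y Z))"
proof -
  let ?G = "insert Y (insert X {})"
  have "derives n ?G Z" by (rule assms(1)) (auto intro: derives.hyp simp: assms)
  then have "derives n (insert X {}) (Imp Y Z)" by (rule DT) (use assms in simp_all)
  then have "derives n {} (Imp X (Imp Y Z))" by (rule DT) (use assms in simp_all)
  then show ?thesis by (simp add: provable_def)
qed

end

theorem mainTheorem8:
  fixes n :: nat and ck cs :: "nat set" and \<phi> \<psi> :: form
  assumes "n \<ge> 1"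
    and "ck \<noteq> {}" and "ck \<subseteq> {1..n}"
    and "cs \<noteq> {}" and "cs \<subseteq> {1..n}"
    and "wf n \<phi>" and "wf n \<psi>"
  shows "(cs \<subseteq> ck \<longrightarrow>
            provable n (Imp (Neg ck \<phi>) (Imp (Neg cs \<psi>) (Imp \<phi> \<psi>))))
       \<and> (ck \<subseteq> cs \<longrightarrow>
            provable n (Imp (Neg ck \<phi>) (Imp (Neg cs \<psi>) (neg (cocat ck cs) (Imp \<phi> \<psi>)))))
       \<and> (ck \<inter> cs = {} \<longrightarrow>
            provable n (Imp (Neg ck \<phi>) (Imp (Neg cs \<psi>) (Neg cs (Imp \<phi> \<psi>)))))"
  using two_hyp[OF assms(1)] part1[OF assms(1)] part2[OF assms(1)] part3[OF assms(1)] assms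
  by auto

end
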